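(* Let $q\ge2$, $d\ge2$, $P\ge1$ and $n\ge1$ be integers, and let $p$ be the smallest prime with $p\ge\max\{P,q\}$. Set $p_0=(d-1)(q-1)+1$ and $p_i=p$ for $i\in[1,d-2]$. Let $a_0\in[0,p_0-1]$ and $a_i\in[0,p_i-1]$ for $i\in[1,d-2]$, and define $$\mathcal{C}_{q,d,P}=\{\boldsymbol{x}\in\Sigma_q^n:\ \mathrm{VT}^{(i)}(\boldsymbol{x})\equiv a_i\pmod{p_i}\ \text{for all } i\in[0,d-2]\}.$$ Then for any two distinct $\boldsymbol{x},\boldsymbol{y}\in\mathcal{C}_{q,d,P}$, if the difference between the largest and the smallest index at which $\boldsymbol{x}$ and $\boldsymbol{y}$ differ is less than $P$, then $d_H(\boldsymbol{x},\boldsymbol{y})\ge d$. Moreover, there exists a choice of $a_0,\dots,a_{d-2}$ such that $r(\mathcal{C}_{q,d,P})\le(d-2)\log_q(2\max\{P,q\})+\log_q((d-1)(q-1)+1)$.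
   Context: $\Sigma_q=\{0,\dots,q-1\}$; $[i,j]=\{i,\dots,j\}$. For $\boldsymbol{x}\in\Sigma_q^n$, $x[i]$ is its $i$-th entry and $\mathrm{VT}^{(k)}(\boldsymbol{x})=\sum_{i=1}^n i^kx[i]$ (integer). $d_H$ is Hamming distance. Redundancy: $r(\mathcal{C})=n-\log_q|\mathcal{C}|$. *)

theory Defs
  imports "HOL-Computational_Algebra.Primes" Complex_Main
begin

text \<open>Words of length n over the alphabet {0,...,q-1}, as lists; the i-th entry
  (1-based, i in [1,n]) of x is x ! (i - 1).\<close>
definition words :: "nat \<Rightarrow> nat \<Rightarrow> nat list set" where
  "words q n = {x. length x = n \<and> (\<forall>i<n. x ! i < q)}"

definition VT :: "nat \<Rightarrow> nat list \<Rightarrow> int" where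
  "VT k x = (\<Sum>i = 1..length x. int i ^ k * int (x ! (i - 1)))"

definition diff_pos :: "nat list \<Rightarrow> nat list \<Rightarrow> nat set" where
  "diff_pos x y = {i \<in> {1..length x}. x ! (i - 1) \<noteq> y ! (i - 1)}"

definition hamming :: "nat list \<Rightarrow> nat list \<Rightarrow> nat" where
  "hamming x y = card (diff_pos x y)"

definition pmin :: "nat \<Rightarrow> nat \<Rightarrow> nat" where
  "pmin P q = (LEAST p. prime p \<and> max P q \<le> p)"

definition modulus :: "nat \<Rightarrow> nat \<Rightarrow> nat \<Rightarrow> nat \<Rightarrow> nat" where
  "modulus q d P i = (if i = 0 then (d - 1) * (q - 1) + 1 else pmin P q)"

definition code :: "nat \<Rightarrow> nat \<Rightarrow> nat \<Rightarrow> nat \<Rightarrow> (nat \<Rightarrow> nat) \<Rightarrow> nat list set" where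
  "code q d P n a = {x \<in> words q n. \<forall>i \<in> {0..d - 2}.
      VT i x mod int (modulus q d P i) = int (a i) mod int (modulus q d P i)}"

definition redundancy :: "nat \<Rightarrow> nat \<Rightarrow> nat list set \<Rightarrow> real" where
  "redundancy q n C = real n - log (real q) (real (card C))"

end

theory Submission
  imports Defs "HOL-Library.Discrete_Functions" "HOL-Library.FuncSet"
begin

fun nodiv :: "nat \<Rightarrow> nat \<Rightarrow> nat \<Rightarrow> bool" where
  "nodiv p d 0 = True"
| "nodiv p d (Suc k) = (p mod d \<noteq> 0 \<and> nodiv p (Suc d) k)"

lemma nodiv_correct: "nodiv p d k \<Longrightarrow> d \<le> e \<Longrightarrow> e < d + k \<Longrightarrow> \<not> e dvd p"
proof (induction k arbitrary: d)
  case 0 then show ?case by simp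
next
  case (Suc k)
  show ?case
  proof (cases "e = d")
    case True then show ?thesis using Suc.prems by auto
  next
    case False then show ?thesis using Suc.prems Suc.IH[of "Suc d"] by auto
  qed
qed

lemma prime_by_nodiv:
  assumes "2 \<le> p" "nodiv p 2 k" "p < (k+2)*(k+2)"
  shows "prime p"
proof -
  have nd: "\<not> e dvd p" if "2 \<le> e" "e * e \<le> p" for e
  proof -
    have "e < k + 2"
    proof (rule ccontr)
      assume "\<not> e < k + 2"
      hence "k+2 \<le> e" by simp
      hence "(k+2)*(k+2) \<le> e * e" by (rule mult_le_mono; simp)
      thus False using that assms by linarith
    qed
    thus ?thesis using nodiv_correct[OF assms(2)] that by auto
  qed
  show ?thesis unfolding prime_nat_iff
  proof (intro conjI allI impI)
    show "1 < p" using assms by simp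
    fix m assume "m dvd p"
    then obtain c where c: "p = m * c" by auto
    show "m = 1 \<or> m = p"
    proof (rule ccontr)
      assume h: "\<not> (m = 1 \<or> m = p)"
      have "m * c \<ge> 2" using c assms(1) by simp
      hence "m \<noteq> 0" "c \<noteq> 0" by (metis mult_0 not_numeral_le_zero, metis mult_0_right not_numeral_le_zero)
      hence "m \<ge> 2" using h by auto
      have "c \<noteq> 1" using c h by auto
      hence "c \<ge> 2" using \<open>c \<noteq> 0\<close> by auto
      show False
      proof (cases "m \<le> c")
        case True
        hence "m * m \<le> p" using c by (simp add: mult_le_mono)
        thus False using nd[of m] \<open>m \<ge> 2\<close> c by auto
      next
        case False
        hence "c * c \<le> p" using c by (simp add: mult_le_mono)
        thus False using nd[of c] \<open>c \<ge> 2\<close> c by auto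
      qed
    qed
  qed
qed

lemma nodiv_unfold: "nodiv p d k = (if k = 0 then True else p mod d \<noteq> 0 \<and> nodiv p (d+1) (k-1))"
  by (cases k) auto

lemma "prime (5003::nat)"
  by (rule prime_by_nodiv[where k=69]) (simp_all add: nodiv_unfold del: nodiv.simps)

lemma Suc_div_split: "(c::nat) > 0 \<Longrightarrow> Suc m div c = m div c + (if c dvd Suc m then 1 else 0)"
  by (auto simp: div_Suc dvd_eq_mod_eq_0)

lemma pow_gt_self: "prime (p::nat) \<Longrightarrow> k < p ^ k"
proof -
  assume "prime p" hence "p \<ge> 2" using prime_ge_2_nat by blast
  have "k < 2 ^ k" by (rule less_exp)
  also have "\<dots> \<le> p ^ k" using \<open>p\<ge>2\<close> by (simp add: power_mono)
  finally show ?thesis .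
qed

lemma legendre:
  assumes "prime (p::nat)" "m \<le> M"
  shows "multiplicity p (fact m :: nat) = (\<Sum>k\<in>{1..M}. m div p ^ k)"
proof -
  have prime_imp_not_unit: "\<not> is_unit p" using assms(1) not_prime_unit by blast
  show ?thesis using assms(2)
proof (induction m)
  case 0 then show ?case by simp
next
  case (Suc m)
  have pos: "p ^ k > 0" for k using assms(1) prime_gt_0_nat by simp
  have "multiplicity p (fact (Suc m) :: nat) = multiplicity p (Suc m) + multiplicity p (fact m :: nat)"
    using assms(1) prime_elem_multiplicity_mult_distrib[of p "Suc m" "fact m :: nat"]
    by (simp only: fact_Suc of_nat_id) simp
  also have "multiplicity p (fact m :: nat) = (\<Sum>k\<in>{1..M}. m div p ^ k)" using Suc by simp
  also have "multiplicity p (Suc m) = card {k\<in>{1..M}. p ^ k dvd Suc m}"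
  proof -
    have "p ^ multiplicity p (Suc m) dvd Suc m" by (rule multiplicity_dvd)
    hence "p ^ multiplicity p (Suc m) \<le> Suc m" by (rule dvd_imp_le) simp
    hence "multiplicity p (Suc m) < Suc m" using pow_gt_self[OF assms(1), of "multiplicity p (Suc m)"] by linarith
    hence le: "multiplicity p (Suc m) \<le> M" using Suc.prems by linarith
    have "{k\<in>{1..M}. p ^ k dvd Suc m} = {1..multiplicity p (Suc m)}"
    proof -
      note eq = power_dvd_iff_le_multiplicity[OF Suc_not_Zero prime_imp_not_unit]
      show ?thesis unfolding eq using le by auto
    qed
    thus ?thesis by simp
  qed
  also have "card {k\<in>{1..M}. p ^ k dvd Suc m} = (\<Sum>k\<in>{1..M}. if p ^ k dvd Suc m then 1 else 0)"
    by (simp add: sum.If_cases Int_def conj_commute)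
  also have "\<dots> + (\<Sum>k\<in>{1..M}. m div p ^ k) = (\<Sum>k\<in>{1..M}. Suc m div p ^ k)"
    by (simp add: Suc_div_split[OF pos] sum.distrib)
  finally show ?case .
qed
qed


lemma twice_div: "(c::nat) > 0 \<Longrightarrow> 2*n div c = 2*(n div c) + (2*(n mod c)) div c \<and> (2*(n mod c)) div c \<le> 1"
proof -
  assume c: "c > 0"
  have e: "2*n = 2*(n mod c) + (2*(n div c))*c"
  proof -
    define q where "q = n div c"
    define r where "r = n mod c"
    have "n = q * c + r" unfolding q_def r_def by simp
    thus ?thesis unfolding q_def[symmetric] r_def[symmetric] by (simp add: algebra_simps)
  qed
  have "2*n div c = 2*(n div c) + (2*(n mod c)) div c"
    unfolding e using c div_mult_self1[of c "2*(n mod c)" "2*(n div c)"] by simp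
  moreover have "(2*(n mod c)) div c < 2"
    using c by (simp add: div_less_iff_less_mult mod_less_divisor)
  ultimately show ?thesis by simp
qed

lemma mult_central:
  assumes "prime (p::nat)"
  shows "multiplicity p ((2*n) choose n) = (\<Sum>k\<in>{1..2*n}. 2*n div p^k - 2*(n div p^k))"
proof -
  have f: "fact (2*n) = (fact n * fact n * ((2*n) choose n) :: nat)"
    using binomial_fact_lemma[of n "2*n"] by simp
  have nz: "fact n \<noteq> (0::nat)" "((2*n) choose n) \<noteq> 0" by auto
  have "multiplicity p (fact (2*n) :: nat) = multiplicity p (fact n :: nat) + multiplicity p (fact n :: nat) + multiplicity p ((2*n) choose n)"
    unfolding f using assms nz by (simp add: prime_elem_multiplicity_mult_distrib)
  moreover have "multiplicity p (fact (2*n) :: nat) = (\<Sum>k\<in>{1..2*n}. 2*n div p^k)"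
    by (rule legendre[OF assms]) simp
  moreover have "multiplicity p (fact n :: nat) = (\<Sum>k\<in>{1..2*n}. n div p^k)"
    by (rule legendre[OF assms]) simp
  moreover have "(\<Sum>k\<in>{1..2*n}. 2*n div p^k - 2*(n div p^k)) = (\<Sum>k\<in>{1..2*n}. 2*n div p^k) - (\<Sum>k\<in>{1..2*n}. 2*(n div p^k))"
  proof (rule sum_subtractf_nat)
    fix k have "p^k > 0" using assms prime_gt_0_nat by simp
    thus "2*(n div p^k) \<le> 2*n div p^k" using twice_div[of "p^k" n] by linarith
  qed
  moreover have "(\<Sum>k\<in>{1..2*n}. 2*(n div p^k)) = 2 * (\<Sum>k\<in>{1..2*n}. n div p^k)"
    by (simp add: sum_distrib_left)
  ultimately show ?thesis by linarith
qed

lemma term_le1: "2*n div (c::nat) - 2*(n div c) \<le> 1"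
proof (cases "c = 0")
  case False thus ?thesis using twice_div[of c n] by simp
qed simp

lemma term_zero: "2*n < (c::nat) \<Longrightarrow> 2*n div c - 2*(n div c) = 0"
  by simp

lemma central_pow_le:
  assumes "prime (p::nat)" "n \<ge> 1"
  shows "p ^ multiplicity p ((2*n) choose n) \<le> 2*n"
proof (rule ccontr)
  define j where "j = multiplicity p ((2*n) choose n)"
  assume "\<not> p ^ multiplicity p ((2*n) choose n) \<le> 2*n"
  hence big: "2*n < p ^ j" unfolding j_def by simp
  have "j = (\<Sum>k\<in>{1..2*n}. 2*n div p^k - 2*(n div p^k))" unfolding j_def by (rule mult_central[OF assms(1)])
  also have "\<dots> \<le> (\<Sum>k\<in>{1..<j}. 1)"
  proof -
    have "(\<Sum>k\<in>{1..2*n}. 2*n div p^k - 2*(n div p^k)) = (\<Sum>k\<in>{1..2*n}. if k < j then 2*n div p^k - 2*(n div p^k) else 0)"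
    proof (rule sum.cong)
      fix k assume "k \<in> {1..2*n}"
      show "2*n div p^k - 2*(n div p^k) = (if k < j then 2*n div p^k - 2*(n div p^k) else 0)"
      proof (cases "k < j")
        case False
        have "p ^ j \<le> p ^ k" using False assms(1) by (intro power_increasing) (auto simp: prime_gt_Suc_0_nat less_imp_le)
        thus ?thesis using False big by simp
      qed simp
    qed simp
    also have "\<dots> = (\<Sum>k\<in>{1..2*n} \<inter> {..<j}. 2*n div p^k - 2*(n div p^k))"
      by (simp add: sum.If_cases Int_def)
    also have "\<dots> \<le> (\<Sum>k\<in>{1..2*n} \<inter> {..<j}. 1)"
      by (rule sum_mono) (rule term_le1)
    also have "\<dots> \<le> (\<Sum>k\<in>{1..<j}. 1)"
      by (rule sum_mono2) auto
    finally show ?thesis .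
  qed
  also have "\<dots> = j - 1" by simp
  finally have "j = 0" by linarith
  thus False using big assms by simp
qed

lemma central_mult_le1:
  assumes "prime (p::nat)" "2*n < p^2"
  shows "multiplicity p ((2*n) choose n) \<le> 1"
proof -
  have "multiplicity p ((2*n) choose n) = (\<Sum>k\<in>{1..2*n}. 2*n div p^k - 2*(n div p^k))" by (rule mult_central[OF assms(1)])
  also have "\<dots> = (\<Sum>k\<in>{1..2*n}. if k = 1 then 2*n div p^k - 2*(n div p^k) else 0)"
  proof (rule sum.cong)
    fix k assume "k \<in> {1..2*n}"
    show "2*n div p^k - 2*(n div p^k) = (if k = 1 then 2*n div p^k - 2*(n div p^k) else 0)"
    proof (cases "k = 1")
      case False
      hence "k \<ge> 2" using \<open>k \<in> {1..2*n}\<close> by auto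
      hence "p ^ 2 \<le> p ^ k" using assms(1) by (intro power_increasing) (auto simp: prime_gt_Suc_0_nat less_imp_le)
      thus ?thesis using False assms(2) by simp
    qed simp
  qed simp
  also have "\<dots> \<le> 1" using term_le1[of n "p^1"] by (simp add: sum.delta)
  finally show ?thesis .
qed

lemma central_mult_zero_mid:
  assumes "prime (p::nat)" "n \<ge> 3" "2*n < 3*p" "p \<le> n"
  shows "multiplicity p ((2*n) choose n) = 0"
proof -
  have "p \<ge> 3" using assms by linarith
  hence "3 * p \<le> p * p" by simp
  hence sq: "2*n < p^2" using assms(3) unfolding power2_eq_square by linarith
  have "multiplicity p ((2*n) choose n) = (\<Sum>k\<in>{1..2*n}. 2*n div p^k - 2*(n div p^k))" by (rule mult_central[OF assms(1)])
  also have "\<dots> = 0"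
  proof (rule sum.neutral, rule ballI)
    fix k assume "k \<in> {1..2*n}"
    show "2*n div p^k - 2*(n div p^k) = 0"
    proof (cases "k = 1")
      case True
      have "n div p = 1" using assms \<open>p\<ge>3\<close> by (intro div_nat_eqI) auto
      moreover have "2*n div p = 2" using assms \<open>p\<ge>3\<close> by (intro div_nat_eqI) auto
      ultimately show ?thesis using True by simp
    next
      case False
      hence "k \<ge> 2" using \<open>k \<in> {1..2*n}\<close> by auto
      hence "p ^ 2 \<le> p ^ k" using assms(1) by (intro power_increasing) (auto simp: prime_gt_Suc_0_nat less_imp_le)
      thus ?thesis using sq by simp
    qed
  qed
  finally show ?thesis .
qed

lemma central_mult_zero_big:
  assumes "prime (p::nat)" "2*n < p"
  shows "multiplicity p ((2*n) choose n) = 0"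
proof -
  have "multiplicity p ((2*n) choose n) = (\<Sum>k\<in>{1..2*n}. 2*n div p^k - 2*(n div p^k))" by (rule mult_central[OF assms(1)])
  also have "\<dots> = 0"
  proof (rule sum.neutral, rule ballI)
    fix k assume "k \<in> {1..2*n}"
    hence "p ^ 1 \<le> p ^ k" using assms(1) by (intro power_increasing) (auto simp: prime_gt_Suc_0_nat less_imp_le)
    thus "2*n div p^k - 2*(n div p^k) = 0" using assms(2) by simp
  qed
  finally show ?thesis .
qed


lemma prod_primes_dvd:
  assumes "M \<subseteq> prime_factors (x::nat)" "x \<noteq> 0"
  shows "\<Prod>M dvd x"
proof -
  have "prod (\<lambda>p. p) M dvd (\<Prod>p\<in>prime_factors x. p ^ multiplicity p x)"
  proof (rule prod_dvd_prod_subset2)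
    fix p assume "p \<in> M"
    hence "multiplicity p x > 0" using assms(1) prime_factors_multiplicity by auto
    thus "p dvd p ^ multiplicity p x" by (simp add: dvd_power)
  qed (use assms in auto)
  thus ?thesis using prime_factorization_nat[of x] assms(2) by simp
qed

lemma primorial_bound: "\<Prod>{p::nat. prime p \<and> p \<le> m} \<le> 4 ^ m"
proof (induction m rule: less_induct)
  case (less m)
  show ?case
  proof (cases "m \<le> 2")
    case True
    have "{p::nat. prime p \<and> p \<le> m} \<subseteq> {2}"
    proof
      fix p assume "p \<in> {p::nat. prime p \<and> p \<le> m}"
      hence "prime p" "p \<le> m" by auto
      hence "p = 2" using prime_ge_2_nat[of p] True by linarith
      thus "p \<in> {2}" by simp
    qed
    hence "{p::nat. prime p \<and> p \<le> m} = {} \<or> {p::nat. prime p \<and> p \<le> m} = {2}" by blast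
    thus ?thesis
    proof
      assume "{p::nat. prime p \<and> p \<le> m} = {2}"
      hence "(2::nat) \<in> {p::nat. prime p \<and> p \<le> m}" by simp
      hence "m = 2" using True by simp
      thus ?thesis using \<open>{p::nat. prime p \<and> p \<le> m} = {2}\<close> by simp
    next
      assume "{p::nat. prime p \<and> p \<le> m} = {}"
      thus ?thesis by (simp only: prod.empty) simp
    qed
  next
    case False
    show ?thesis
    proof (cases "even m")
      case True
      have "\<not> prime m"
      proof
        assume "prime m" hence "odd m" using prime_odd_nat[of m] False by simp
        thus False using True by simp
      qed
      have "{p::nat. prime p \<and> p \<le> m} = {p. prime p \<and> p \<le> m - 1}"
      proof (intro Collect_cong iffI conjI)
        fix p assume "prime p \<and> p \<le> m"
        moreover hence "p \<noteq> m" using \<open>\<not> prime m\<close> by auto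
        ultimately show "p \<le> m - 1" by linarith
      qed auto
      hence "\<Prod>{p::nat. prime p \<and> p \<le> m} \<le> 4 ^ (m - 1)" using less.IH[of "m-1"] False by simp
      also have "\<dots> \<le> 4 ^ m" by (rule power_increasing) auto
      finally show ?thesis .
    next
      case odd: False
      then obtain k where m: "m = 2*k+1" using oddE by blast
      have k1: "k \<ge> 1" using m False by simp
      define A where "A = {p::nat. prime p \<and> p \<le> k+1}"
      define M where "M = {p::nat. prime p \<and> k+1 < p \<and> p \<le> 2*k+1}"
      have split: "{p::nat. prime p \<and> p \<le> m} = A \<union> M" "A \<inter> M = {}" unfolding A_def M_def m by auto
      have fin: "finite A" "finite M" unfolding A_def M_def by auto
      have "\<Prod>{p::nat. prime p \<and> p \<le> m} = \<Prod>A * \<Prod>M"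
        unfolding split(1) using fin split(2) by (rule prod.union_disjoint)
      also have "\<Prod>A \<le> 4 ^ (k+1)" unfolding A_def using less.IH[of "k+1"] m k1 by simp
      also have "\<Prod>M \<le> 4 ^ k"
      proof -
        define C where "C = (2*k+1) choose k"
        have C0: "C \<noteq> 0" unfolding C_def by simp
        have "M \<subseteq> prime_factors C"
        proof
          fix p assume p: "p \<in> M"
          hence pr: "prime p" unfolding M_def by auto
          have f: "fact k * fact (k+1) * C = (fact (2*k+1) :: nat)"
            unfolding C_def using binomial_fact_lemma[of k "2*k+1"] by (simp add: Suc_diff_le)
          have "p \<le> 2*k+1" using p unfolding M_def by auto
          hence "p dvd fact (2*k+1)" using prime_dvd_fact_iff[OF pr] by blast
          hence "p dvd fact k * fact (k+1) * C" unfolding f[symmetric] by simp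
          moreover have "\<not> p \<le> k" "\<not> p \<le> k+1" using p unfolding M_def by auto
          hence "\<not> p dvd (fact k :: nat)" "\<not> p dvd (fact (k+1) :: nat)"
            using prime_dvd_fact_iff[OF pr] by blast+
          ultimately have "p dvd C" using pr by (simp add: prime_dvd_mult_iff)
          thus "p \<in> prime_factors C" using pr C0 by (simp add: in_prime_factors_iff)
        qed
        hence "\<Prod>M dvd C" using C0 by (rule prod_primes_dvd)
        hence "\<Prod>M \<le> C" using C0 by (simp add: dvd_imp_le)
        also have "C \<le> (\<Sum>i\<le>k. (2*k+1) choose i)" unfolding C_def
          by (rule member_le_sum) auto
        also have "\<dots> = 2 ^ (2*k)" by (rule binomial_r_part_sum)
        also have "\<dots> = 4 ^ k" by (simp add: power_mult)
        finally show ?thesis .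
      qed
      also have "4 ^ (k+1) * 4 ^ k = (4::nat) ^ m" unfolding m by (simp add: power_add[symmetric])
      finally show ?thesis by simp
    qed
  qed
qed


lemma pow12: "(80::nat) \<le> t \<Longrightarrow> t ^ 12 \<le> 2 ^ t"
proof (induction t rule: dec_induct)
  case base show ?case by simp
next
  case (step t)
  have "80 * (t+1) \<le> 81 * t" using step.hyps(1) by simp
  hence "(80 * (t+1)) ^ 12 \<le> (81 * t) ^ 12" by (rule power_mono) simp
  hence "80^12 * (t+1)^12 \<le> 81^12 * t^12" by (simp only: power_mult_distrib)
  also have "\<dots> \<le> (2 * 80^12) * t^12" by (rule mult_right_mono) simp_all
  finally have "80^12 * (t+1)^12 \<le> 80^12 * (2 * t^12)" by (simp add: ac_simps)
  hence "(t+1)^12 \<le> 2 * t^12" using Nat.mult_le_cancel1[of "80^12" "(t+1)^12" "2*t^12"] by presburger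
  also have "\<dots> \<le> 2 * 2^t" using step.IH by simp
  finally show ?case by simp
qed

lemma arith_contra:
  assumes "n \<ge> 3200"
  shows "(2*n) ^ (floor_sqrt (2*n) + 1) * 4 ^ (2*n div 3) < 4 ^ n"
proof (rule ccontr)
  define s where "s = floor_sqrt (2*n)"
  define t where "t = s + 1"
  assume "\<not> (2*n) ^ (floor_sqrt (2*n) + 1) * 4 ^ (2*n div 3) < 4 ^ n"
  hence H: "4 ^ n \<le> (2*n) ^ t * 4 ^ (2*n div 3)" unfolding t_def s_def by simp
  have s2: "s^2 \<le> 2*n" unfolding s_def by simp
  have t2: "2*n < t^2" unfolding t_def s_def using Suc_floor_sqrt_power2_gt[of "2*n"] by simp
  have "80 \<le> s" unfolding s_def using assms by (intro le_floor_sqrtI) simp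
  hence t80: "80 \<le> t" unfolding t_def by simp
  define a where "a = 2*n div 3"
  define b where "b = n - a"
  have nab: "n = a + b" "n \<le> 3 * b" unfolding a_def b_def by auto
  have e4: "(4::nat) ^ n = 4 ^ a * 4 ^ b" by (subst nab(1)) (rule power_add)
  have H': "(4::nat) ^ n \<le> (2*n) ^ t * 4 ^ a" unfolding a_def by (rule H)
  have "(4::nat) ^ a * 4 ^ b \<le> 4 ^ a * (2*n) ^ t" using H' unfolding e4 by (simp only: mult.commute)
  hence "4 ^ b \<le> (2*n) ^ t" by (simp only: mult_le_cancel1) simp
  also have "\<dots> \<le> (t^2) ^ t" using t2 by (intro power_mono) simp_all
  finally have "(4::nat) ^ b \<le> t ^ (2*t)" by (simp add: power_mult)
  hence "(4 ^ b) ^ 3 \<le> (t ^ (2*t)) ^ 3" by (rule power_mono) simp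
  hence "(4::nat) ^ (3*b) \<le> t ^ (6*t)" by (simp add: power_mult[symmetric] ac_simps)
  moreover have "(4::nat) ^ n \<le> 4 ^ (3*b)" using nab(2) by (intro power_increasing) simp_all
  moreover have "(2::nat) ^ (s^2) \<le> 4 ^ n"
  proof -
    have "(2::nat) ^ (s^2) \<le> 2 ^ (2*n)" using s2 by (intro power_increasing) simp_all
    also have "\<dots> = 4 ^ n" by (simp add: power_mult)
    finally show ?thesis .
  qed
  ultimately have "(2::nat) ^ (s^2) \<le> t ^ (6*t)" by linarith
  hence "((2::nat) ^ (s^2)) ^ 2 \<le> (t ^ (6*t)) ^ 2" by (rule power_mono) simp
  hence "(2::nat) ^ (2*s^2) \<le> (t ^ 12) ^ t" by (simp add: power_mult[symmetric] ac_simps)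
  also have "\<dots> \<le> (2 ^ t) ^ t" using pow12[OF t80] by (rule power_mono) simp
  also have "\<dots> = 2 ^ (t^2)" by (simp add: power_mult[symmetric] power2_eq_square)
  finally have "2*s^2 \<le> t^2" by simp
  hence "2*s*s \<le> (s+1)*(s+1)" unfolding t_def power2_eq_square by (simp add: ac_simps)
  moreover have "(s+1)*(s+1) < 2*s*s"
  proof -
    have "(s+1)*(s+1) = s*s + 2*s + 1" by (simp add: algebra_simps)
    also have "\<dots> < s*s + s*s"
    proof -
      have "80*s \<le> s*s" using \<open>80 \<le> s\<close> by (rule mult_le_mono1)
      thus ?thesis using \<open>80 \<le> s\<close> by linarith
    qed
    finally show ?thesis by simp
  qed
  ultimately show False by simp
qed

lemma prime_2: "prime (2::nat)"
  by (rule prime_by_nodiv[where k=0]) (simp_all add: nodiv_unfold del: nodiv.simps)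

lemma prime_3: "prime (3::nat)"
  by (rule prime_by_nodiv[where k=0]) (simp_all add: nodiv_unfold del: nodiv.simps)

lemma prime_5: "prime (5::nat)"
  by (rule prime_by_nodiv[where k=1]) (simp_all add: nodiv_unfold del: nodiv.simps)

lemma prime_7: "prime (7::nat)"
  by (rule prime_by_nodiv[where k=1]) (simp_all add: nodiv_unfold del: nodiv.simps)

lemma prime_13: "prime (13::nat)"
  by (rule prime_by_nodiv[where k=2]) (simp_all add: nodiv_unfold del: nodiv.simps)

lemma prime_23: "prime (23::nat)"
  by (rule prime_by_nodiv[where k=3]) (simp_all add: nodiv_unfold del: nodiv.simps)

lemma prime_43: "prime (43::nat)"
  by (rule prime_by_nodiv[where k=5]) (simp_all add: nodiv_unfold del: nodiv.simps)

lemma prime_83: "prime (83::nat)"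
  by (rule prime_by_nodiv[where k=8]) (simp_all add: nodiv_unfold del: nodiv.simps)

lemma prime_163: "prime (163::nat)"
  by (rule prime_by_nodiv[where k=11]) (simp_all add: nodiv_unfold del: nodiv.simps)

lemma prime_317: "prime (317::nat)"
  by (rule prime_by_nodiv[where k=16]) (simp_all add: nodiv_unfold del: nodiv.simps)

lemma prime_631: "prime (631::nat)"
  by (rule prime_by_nodiv[where k=24]) (simp_all add: nodiv_unfold del: nodiv.simps)

lemma prime_1259: "prime (1259::nat)"
  by (rule prime_by_nodiv[where k=34]) (simp_all add: nodiv_unfold del: nodiv.simps)

lemma prime_2503: "prime (2503::nat)"
  by (rule prime_by_nodiv[where k=49]) (simp_all add: nodiv_unfold del: nodiv.simps)

lemma prime_5003: "prime (5003::nat)"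
  by (rule prime_by_nodiv[where k=69]) (simp_all add: nodiv_unfold del: nodiv.simps)

lemma witness_step: "prime (p::nat) \<Longrightarrow> p \<le> 2*a \<Longrightarrow> a \<le> n \<Longrightarrow> n < p \<Longrightarrow> \<exists>p. prime p \<and> n < p \<and> p \<le> 2*n"
  by (intro exI[of _ p]) simp

lemma bertrand_small:
  assumes "1 \<le> (n::nat)" "n < 5003"
  shows "\<exists>p. prime p \<and> n < p \<and> p \<le> 2*n"
proof -
  have c2: ?thesis if "n < 2" by (rule witness_step[OF prime_2, of 1]) (use that assms in simp_all)
  have c3: ?thesis if "n < 3"
  proof (cases "n < 2")
    case True then show ?thesis using c2 by blast
  next
    case False then show ?thesis using that by (intro witness_step[OF prime_3, of 2]) simp_all
  qed
  have c5: ?thesis if "n < 5"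
  proof (cases "n < 3")
    case True then show ?thesis using c3 by blast
  next
    case False then show ?thesis using that by (intro witness_step[OF prime_5, of 3]) simp_all
  qed
  have c7: ?thesis if "n < 7"
  proof (cases "n < 5")
    case True then show ?thesis using c5 by blast
  next
    case False then show ?thesis using that by (intro witness_step[OF prime_7, of 5]) simp_all
  qed
  have c13: ?thesis if "n < 13"
  proof (cases "n < 7")
    case True then show ?thesis using c7 by blast
  next
    case False then show ?thesis using that by (intro witness_step[OF prime_13, of 7]) simp_all
  qed
  have c23: ?thesis if "n < 23"
  proof (cases "n < 13")
    case True then show ?thesis using c13 by blast
  next
    case False then show ?thesis using that by (intro witness_step[OF prime_23, of 13]) simp_all
  qed
  have c43: ?thesis if "n < 43"
  proof (cases "n < 23")
    case True then show ?thesis using c23 by blast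
  next
    case False then show ?thesis using that by (intro witness_step[OF prime_43, of 23]) simp_all
  qed
  have c83: ?thesis if "n < 83"
  proof (cases "n < 43")
    case True then show ?thesis using c43 by blast
  next
    case False then show ?thesis using that by (intro witness_step[OF prime_83, of 43]) simp_all
  qed
  have c163: ?thesis if "n < 163"
  proof (cases "n < 83")
    case True then show ?thesis using c83 by blast
  next
    case False then show ?thesis using that by (intro witness_step[OF prime_163, of 83]) simp_all
  qed
  have c317: ?thesis if "n < 317"
  proof (cases "n < 163")
    case True then show ?thesis using c163 by blast
  next
    case False then show ?thesis using that by (intro witness_step[OF prime_317, of 163]) simp_all
  qed
  have c631: ?thesis if "n < 631"
  proof (cases "n < 317")
    case True then show ?thesis using c317 by blast
  next
    case False then show ?thesis using that by (intro witness_step[OF prime_631, of 317]) simp_all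
  qed
  have c1259: ?thesis if "n < 1259"
  proof (cases "n < 631")
    case True then show ?thesis using c631 by blast
  next
    case False then show ?thesis using that by (intro witness_step[OF prime_1259, of 631]) simp_all
  qed
  have c2503: ?thesis if "n < 2503"
  proof (cases "n < 1259")
    case True then show ?thesis using c1259 by blast
  next
    case False then show ?thesis using that by (intro witness_step[OF prime_2503, of 1259]) simp_all
  qed
  have c5003: ?thesis if "n < 5003"
  proof (cases "n < 2503")
    case True then show ?thesis using c2503 by blast
  next
    case False then show ?thesis using that by (intro witness_step[OF prime_5003, of 2503]) simp_all
  qed
  show ?thesis using c5003 assms by blast
qed


lemma central_lower_nat: "n \<ge> 1 \<Longrightarrow> 4 ^ n \<le> ((2*n) choose n) * (2*n)"
proof -
  assume n: "n \<ge> 1"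
  have "4^n / (2*real n) \<le> real ((2*n) choose n)" using n by (intro central_binomial_lower_bound) simp
  hence "real (4^n) \<le> real (((2*n) choose n) * (2*n))" using n by (simp add: field_simps)
  thus ?thesis by (simp only: of_nat_le_iff)
qed

lemma bertrand_large:
  assumes n: "(n::nat) \<ge> 3200"
  shows "\<exists>p. prime p \<and> n < p \<and> p \<le> 2*n"
proof (rule ccontr)
  assume H: "\<not> (\<exists>p. prime p \<and> n < p \<and> p \<le> 2*n)"
  define C where "C = (2*n) choose n"
  have C0: "C > 0" unfolding C_def by simp
  define PF where "PF = prime_factors C"
  define s where "s = floor_sqrt (2*n)"
  have PF: "prime p \<and> 3*p \<le> 2*n" if "p \<in> PF" for p
  proof -
    have pr: "prime p" and m: "multiplicity p C > 0" using that unfolding PF_def prime_factors_multiplicity by auto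
    have "\<not> 2*n < p" using central_mult_zero_big[OF pr, of n] m unfolding C_def by auto
    moreover have "\<not> (n < p \<and> p \<le> 2*n)" using H pr by auto
    moreover have "\<not> (2*n < 3*p \<and> p \<le> n)" using central_mult_zero_mid[OF pr, of n] m n unfolding C_def by auto
    ultimately show ?thesis using pr by linarith
  qed
  have finPF: "finite PF" unfolding PF_def by simp
  have "C = (\<Prod>p\<in>PF. p ^ multiplicity p C)" unfolding PF_def using prime_factorization_nat[OF C0] .
  also have "\<dots> = (\<Prod>p\<in>PF \<inter> {..s}. p ^ multiplicity p C) * (\<Prod>p\<in>PF - {..s}. p ^ multiplicity p C)"
    using finPF by (rule prod.Int_Diff)
  also have "(\<Prod>p\<in>PF \<inter> {..s}. p ^ multiplicity p C) \<le> (2*n) ^ s"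
  proof -
    have "(\<Prod>p\<in>PF \<inter> {..s}. p ^ multiplicity p C) \<le> (\<Prod>p\<in>PF \<inter> {..s}. 2*n)"
    proof (rule prod_mono, rule conjI)
      fix p assume "p \<in> PF \<inter> {..s}"
      hence "prime p" using PF by auto
      thus "p ^ multiplicity p C \<le> 2*n" unfolding C_def using central_pow_le n by simp
    qed simp
    also have "\<dots> = (2*n) ^ card (PF \<inter> {..s})" by simp
    also have "\<dots> \<le> (2*n) ^ s"
    proof (rule power_increasing)
      have "PF \<inter> {..s} \<subseteq> {1..s}"
      proof
        fix p assume "p \<in> PF \<inter> {..s}"
        moreover hence "prime p" using PF by auto
        ultimately show "p \<in> {1..s}" using prime_gt_0_nat[of p] by auto
      qed
      hence "card (PF \<inter> {..s}) \<le> card {1..s}" by (intro card_mono) simp_all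
      thus "card (PF \<inter> {..s}) \<le> s" by simp
    qed (use n in simp)
    finally show ?thesis .
  qed
  also have "(\<Prod>p\<in>PF - {..s}. p ^ multiplicity p C) \<le> 4 ^ (2*n div 3)"
  proof -
    have "(\<Prod>p\<in>PF - {..s}. p ^ multiplicity p C) \<le> (\<Prod>p\<in>PF - {..s}. p)"
    proof (rule prod_mono, rule conjI)
      fix p assume p: "p \<in> PF - {..s}"
      hence pr: "prime p" using PF by auto
      have "s + 1 \<le> p" using p by auto
      hence "(s+1)^2 \<le> p^2" by (rule power_mono) simp
      moreover have "2*n < (s+1)^2" unfolding s_def using Suc_floor_sqrt_power2_gt[of "2*n"] by simp
      ultimately have "2*n < p^2" by linarith
      hence "multiplicity p C \<le> 1" unfolding C_def by (rule central_mult_le1[OF pr])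
      hence "multiplicity p C = 0 \<or> multiplicity p C = 1" by linarith
      thus "p ^ multiplicity p C \<le> p" using prime_gt_0_nat[OF pr] by auto
    qed simp
    also have "\<dots> \<le> \<Prod>{p::nat. prime p \<and> p \<le> 2*n div 3}"
    proof (rule dvd_imp_le)
      show "(\<Prod>p\<in>PF - {..s}. p) dvd \<Prod>{p::nat. prime p \<and> p \<le> 2*n div 3}"
      proof (rule prod_dvd_prod_subset)
        show "PF - {..s} \<subseteq> {p::nat. prime p \<and> p \<le> 2*n div 3}"
        proof
          fix p assume "p \<in> PF - {..s}"
          hence pp: "prime p" "3*p \<le> 2*n" using PF by auto
          have "p = 3*p div 3" by simp
          also have "\<dots> \<le> 2*n div 3" using pp(2) by (rule div_le_mono)
          finally show "p \<in> {p::nat. prime p \<and> p \<le> 2*n div 3}" using pp(1) by simp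
        qed
      qed simp
      show "\<Prod>{p::nat. prime p \<and> p \<le> 2*n div 3} > 0"
        by (rule prod_pos) (auto simp: prime_gt_0_nat)
    qed
    also have "\<dots> \<le> 4 ^ (2*n div 3)" by (rule primorial_bound)
    finally show ?thesis .
  qed
  finally have "C \<le> (2*n) ^ s * 4 ^ (2*n div 3)" by (simp add: mult_le_mono)
  hence "C * (2*n) \<le> (2*n) ^ (s+1) * 4 ^ (2*n div 3)" by (simp add: ac_simps)
  moreover have "4 ^ n \<le> C * (2*n)" unfolding C_def using n by (intro central_lower_nat) simp
  moreover have "(2*n) ^ (s+1) * 4 ^ (2*n div 3) < 4 ^ n" unfolding s_def using n by (rule arith_contra)
  ultimately show False by linarith
qed

theorem bertrand: "(n::nat) \<ge> 1 \<Longrightarrow> \<exists>p. prime p \<and> n < p \<and> p \<le> 2*n"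
proof -
  assume "n \<ge> 1"
  show ?thesis
  proof (cases "n < 5003")
    case True thus ?thesis using bertrand_small \<open>n \<ge> 1\<close> by blast
  next
    case False thus ?thesis using bertrand_large by simp
  qed
qed


lemma vand_dvd:
  fixes e :: "nat \<Rightarrow> int" and D R :: "nat set" and pp :: int
  assumes hyp: "\<And>k. k \<le> K \<Longrightarrow> pp dvd (\<Sum>i\<in>D. e i * int i ^ k)"
  assumes "finite R"
  shows "j + card R \<le> K \<Longrightarrow> pp dvd (\<Sum>i\<in>D. e i * int i ^ j * (\<Prod>r\<in>R. int i - int r))"
  using assms(2)
proof (induction R arbitrary: j rule: finite_induct)
  case empty
  then show ?case using hyp[of j] by simp
next
  case (insert r R)
  have c: "card (insert r R) = card R + 1" using insert.hyps by simp
  have "(\<Sum>i\<in>D. e i * int i ^ j * (\<Prod>r'\<in>insert r R. int i - int r'))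
      = (\<Sum>i\<in>D. e i * int i ^ (j+1) * (\<Prod>r'\<in>R. int i - int r')) - int r * (\<Sum>i\<in>D. e i * int i ^ j * (\<Prod>r'\<in>R. int i - int r'))"
    using insert.hyps by (simp add: sum_distrib_left sum_subtractf[symmetric] algebra_simps)
  moreover have "pp dvd (\<Sum>i\<in>D. e i * int i ^ (j+1) * (\<Prod>r'\<in>R. int i - int r'))"
    using insert.IH[of "j+1"] insert.prems c by simp
  moreover have "pp dvd (\<Sum>i\<in>D. e i * int i ^ j * (\<Prod>r'\<in>R. int i - int r'))"
    using insert.IH[of j] insert.prems c by simp
  ultimately show ?case by simp
qed

lemma pmin_props:
  assumes "q \<ge> 2"
  shows "prime (pmin P q) \<and> max P q \<le> pmin P q \<and> pmin P q \<le> 2 * max P q"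
proof -
  have "max P q \<ge> 1" using assms by simp
  from bertrand[OF this] obtain p where p: "prime p" "max P q < p" "p \<le> 2 * max P q" by blast
  have ex: "\<exists>p. prime p \<and> max P q \<le> p" using p by auto
  have "prime (pmin P q) \<and> max P q \<le> pmin P q" unfolding pmin_def by (rule LeastI_ex[OF ex])
  moreover have "pmin P q \<le> p" unfolding pmin_def by (rule Least_le) (use p in auto)
  ultimately show ?thesis using p by linarith
qed


lemma VT_diff:
  assumes "length x = n" "length y = n"
  shows "VT k x - VT k y = (\<Sum>i\<in>diff_pos x y. (int (x!(i-1)) - int (y!(i-1))) * int i ^ k)"
proof -
  have "VT k x - VT k y = (\<Sum>i\<in>{1..n}. (int (x!(i-1)) - int (y!(i-1))) * int i ^ k)"
    unfolding VT_def assms by (simp add: sum_subtractf[symmetric] algebra_simps)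
  also have "\<dots> = (\<Sum>i\<in>diff_pos x y. (int (x!(i-1)) - int (y!(i-1))) * int i ^ k)"
    by (rule sum.mono_neutral_right) (auto simp: diff_pos_def assms)
  finally show ?thesis .
qed

lemma part1:
  fixes q d P n :: nat
  assumes q: "q \<ge> 2" and d: "d \<ge> 2" and P: "P \<ge> 1"
  assumes x: "x \<in> code q d P n a" and y: "y \<in> code q d P n a" and xy: "x \<noteq> y"
  assumes span: "Max (diff_pos x y) - Min (diff_pos x y) < P"
  shows "hamming x y \<ge> d"
proof (rule ccontr)
  define p where "p = pmin P q"
  define D where "D = diff_pos x y"
  define e where "e i = int (x!(i-1)) - int (y!(i-1))" for i
  have pp: "prime p" "max P q \<le> p" using pmin_props[OF q] unfolding p_def by auto
  have lx: "length x = n" "\<forall>i<n. x!i < q" using x unfolding code_def words_def by auto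
  have ly: "length y = n" "\<forall>i<n. y!i < q" using y unfolding code_def words_def by auto
  assume "\<not> d \<le> hamming x y"
  hence cD: "card D \<le> d - 1" unfolding hamming_def D_def by simp
  have Dsub: "D \<subseteq> {1..n}" unfolding D_def diff_pos_def lx by auto
  have finD: "finite D" using Dsub finite_subset by blast
  have Dne: "D \<noteq> {}"
  proof
    assume "D = {}"
    hence "x = y"
    proof (intro nth_equalityI)
      fix i assume "D = {}" "i < length x"
      hence "Suc i \<notin> diff_pos x y" unfolding D_def by auto
      thus "x ! i = y ! i" using \<open>i < length x\<close> lx unfolding diff_pos_def by auto
    qed (simp add: lx ly)
    thus False using xy by simp
  qed
  have ebound: "\<bar>e i\<bar> \<le> int q - 1" if "i \<in> D" for i
  proof -
    have "i \<in> {1..n}" using that Dsub by blast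
    hence "i - 1 < n" by auto
    hence "x!(i-1) < q" "y!(i-1) < q" using lx ly by auto
    thus ?thesis unfolding e_def by linarith
  qed
  have enz: "e i \<noteq> 0" if "i \<in> D" for i using that unfolding D_def diff_pos_def e_def by auto
  have Sdef: "VT k x - VT k y = (\<Sum>i\<in>D. e i * int i ^ k)" for k
    unfolding D_def e_def using VT_diff[OF lx(1) ly(1)] .
  have cong: "int (modulus q d P k) dvd (\<Sum>i\<in>D. e i * int i ^ k)" if "k \<le> d - 2" for k
  proof -
    have "VT k x mod int (modulus q d P k) = VT k y mod int (modulus q d P k)"
      using x y that unfolding code_def by auto
    thus ?thesis unfolding Sdef[symmetric] by (simp add: mod_eq_dvd_iff)
  qed
  have allp: "int p dvd (\<Sum>i\<in>D. e i * int i ^ k)" if "k \<le> d - 2" for k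
  proof (cases "k = 0")
    case False
    thus ?thesis using cong[OF that] unfolding modulus_def p_def by simp
  next
    case True
    have "(\<Sum>i\<in>D. e i * int i ^ k) = 0"
    proof (rule ccontr)
      assume nz: "(\<Sum>i\<in>D. e i * int i ^ k) \<noteq> 0"
      have "\<bar>int (modulus q d P k)\<bar> \<le> \<bar>\<Sum>i\<in>D. e i * int i ^ k\<bar>"
        by (rule dvd_imp_le_int[OF nz cong[OF that]])
      also have "\<dots> \<le> (\<Sum>i\<in>D. \<bar>e i\<bar>)" using True by (simp add: sum_abs)
      also have "\<dots> \<le> (\<Sum>i\<in>D. int q - 1)" by (rule sum_mono) (rule ebound)
      also have "\<dots> = int (card D) * (int q - 1)" by simp
      also have "\<dots> \<le> int (d - 1) * (int q - 1)" using cD q by (intro mult_right_mono) simp_all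
      finally have "\<bar>int (modulus q d P k)\<bar> \<le> int (d - 1) * (int q - 1)" .
      moreover have "modulus q d P k = (d - 1) * (q - 1) + 1" using True unfolding modulus_def by simp
      moreover have "int (q - 1) = int q - 1" using q by simp
      ultimately show False by simp
    qed
    thus ?thesis by simp
  qed
  obtain s where s: "s \<in> D" using Dne by blast
  define R where "R = D - {s}"
  have finR: "finite R" unfolding R_def using finD by simp
  have cR: "0 + card R \<le> d - 2" unfolding R_def using cD s finD by (simp add: card_Diff_singleton)
  have "int p dvd (\<Sum>i\<in>D. e i * int i ^ 0 * (\<Prod>r\<in>R. int i - int r))"
    by (rule vand_dvd[OF allp finR cR])
  also have "(\<Sum>i\<in>D. e i * int i ^ 0 * (\<Prod>r\<in>R. int i - int r)) = e s * (\<Prod>r\<in>R. int s - int r)"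
  proof -
    have "(\<Sum>i\<in>D. e i * int i ^ 0 * (\<Prod>r\<in>R. int i - int r))
        = e s * int s ^ 0 * (\<Prod>r\<in>R. int s - int r) + (\<Sum>i\<in>D - {s}. e i * int i ^ 0 * (\<Prod>r\<in>R. int i - int r))"
      using finD s by (rule sum.remove)
    also have "(\<Sum>i\<in>D - {s}. e i * int i ^ 0 * (\<Prod>r\<in>R. int i - int r)) = 0"
    proof (rule sum.neutral, rule ballI)
      fix i assume "i \<in> D - {s}"
      hence "i \<in> R" unfolding R_def .
      hence "(\<Prod>r\<in>R. int i - int r) = 0" by (intro prod_zero[OF finR] bexI[of _ i]) simp_all
      thus "e i * int i ^ 0 * (\<Prod>r\<in>R. int i - int r) = 0" by simp
    qed
    finally show ?thesis by simp
  qed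
  finally have dv: "int p dvd e s * (\<Prod>r\<in>R. int s - int r)" .
  have ip: "prime (int p)" using pp(1) by simp
  have "\<not> int p dvd (\<Prod>r\<in>R. int s - int r)"
  proof
    assume A: "int p dvd (\<Prod>r\<in>R. int s - int r)"
    have "\<exists>r\<in>R. int p dvd int s - int r" by (rule iffD1[OF prime_dvd_prod_iff[OF finR ip] A])
    then obtain r where r: "r \<in> R" "int p dvd int s - int r" by blast
    have rD: "r \<in> D" "r \<noteq> s" using r(1) unfolding R_def by auto
    have "Min D \<le> r" "r \<le> Max D" "Min D \<le> s" "s \<le> Max D"
      using Min_le[OF finD rD(1)] Max_ge[OF finD rD(1)] Min_le[OF finD s] Max_ge[OF finD s] by auto
    hence a1: "\<bar>int s - int r\<bar> \<le> int (Max D) - int (Min D)" by (simp add: abs_le_iff)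
    have "Max D - Min D < P" using span unfolding D_def .
    hence a2: "int (Max D) - int (Min D) < int P" using \<open>Min D \<le> s\<close> \<open>s \<le> Max D\<close> by linarith
    have nz: "int s - int r \<noteq> 0" using rD(2) by simp
    have a3: "\<bar>int p\<bar> \<le> \<bar>int s - int r\<bar>" by (rule dvd_imp_le_int[OF nz r(2)])
    have a4: "int P \<le> int p" using pp(2) by simp
    from a1 a2 a3 a4 show False by simp
  qed
  hence "int p dvd e s" using dv ip by (simp add: prime_dvd_mult_iff)
  hence "\<bar>int p\<bar> \<le> \<bar>e s\<bar>" using enz[OF s] by (intro dvd_imp_le_int) simp_all
  moreover have "\<bar>e s\<bar> \<le> int q - 1" by (rule ebound[OF s])
  ultimately show False using pp(2) by simp
qed


lemma words_eq: "words q n = {xs. set xs \<subseteq> {..<q} \<and> length xs = n}"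
  unfolding words_def by (auto simp: in_set_conv_nth) (meson lessThan_iff nth_mem subsetD)

lemma card_words: "card (words q n) = q ^ n" and finite_words: "finite (words q n)"
  unfolding words_eq by (simp_all add: card_lists_length_eq finite_lists_length_eq)

lemma modulus_pos: "q \<ge> 2 \<Longrightarrow> modulus q d P i > 0"
  unfolding modulus_def using pmin_props[of q P] prime_gt_0_nat by auto

lemma pigeon:
  fixes q d P n :: nat
  assumes q: "q \<ge> 2"
  shows "\<exists>a. (\<forall>i\<in>{0..d-2}. a i < modulus q d P i) \<and>
           q ^ n \<le> card (code q d P n a) * (\<Prod>i\<in>{0..d-2}. modulus q d P i)"
proof -
  define I where "I = {0..d-2}"
  define m where "m i = modulus q d P i" for i
  define A where "A = (\<Pi>\<^sub>E i\<in>I. {..<m i})"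
  have finI: "finite I" unfolding I_def by simp
  have finA: "finite A" unfolding A_def using finI by (simp add: finite_PiE)
  have cardA: "card A = (\<Prod>i\<in>I. m i)" unfolding A_def using finI by (simp add: card_PiE)
  have mpos: "m i > 0" for i unfolding m_def using modulus_pos[OF q] .
  have cover: "words q n \<subseteq> (\<Union>a\<in>A. code q d P n a)"
  proof
    fix x assume x: "x \<in> words q n"
    define ax where "ax = restrict (\<lambda>i. nat (VT i x mod int (m i))) I"
    have "ax \<in> A" unfolding A_def ax_def using mpos by (auto simp: nat_less_iff)
    moreover have "x \<in> code q d P n ax"
      unfolding code_def using x mpos by (auto simp: ax_def I_def m_def)
    ultimately show "x \<in> (\<Union>a\<in>A. code q d P n a)" by blast
  qed
  have "q ^ n = card (words q n)" by (simp add: card_words)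
  also have "\<dots> \<le> card (\<Union>a\<in>A. code q d P n a)"
  proof (rule card_mono[OF _ cover])
    have "(\<Union>a\<in>A. code q d P n a) \<subseteq> words q n" unfolding code_def by auto
    thus "finite (\<Union>a\<in>A. code q d P n a)" using finite_words finite_subset by blast
  qed
  also have "\<dots> \<le> (\<Sum>a\<in>A. card (code q d P n a))" by (rule card_UN_le[OF finA])
  finally have tot: "q ^ n \<le> (\<Sum>a\<in>A. card (code q d P n a))" .
  have "\<exists>a\<in>A. q ^ n \<le> card (code q d P n a) * card A"
  proof (rule ccontr)
    assume "\<not> ?thesis"
    hence lt: "\<And>a. a \<in> A \<Longrightarrow> card (code q d P n a) * card A < q ^ n" by auto
    have "A \<noteq> {}"
    proof -
      have "(\<lambda>i\<in>I. 0) \<in> A" unfolding A_def using mpos by auto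
      thus ?thesis by blast
    qed
    hence "(\<Sum>a\<in>A. card (code q d P n a) * card A) < (\<Sum>a\<in>A. q ^ n)"
      using finA lt by (intro sum_strict_mono) auto
    moreover have "(\<Sum>a\<in>A. card (code q d P n a) * card A) = (\<Sum>a\<in>A. card (code q d P n a)) * card A"
      by (simp add: sum_distrib_right)
    moreover have "(\<Sum>a\<in>A. q ^ n) = q ^ n * card A" by simp
    ultimately have "(\<Sum>a\<in>A. card (code q d P n a)) * card A < q ^ n * card A" by simp
    hence "(\<Sum>a\<in>A. card (code q d P n a)) < q ^ n" by simp
    thus False using tot by simp
  qed
  then obtain a where a: "a \<in> A" "q ^ n \<le> card (code q d P n a) * card A" by blast
  have "\<forall>i\<in>{0..d-2}. a i < modulus q d P i" using a(1) unfolding A_def I_def m_def by auto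
  thus ?thesis using a(2) unfolding cardA I_def m_def by blast
qed


lemma prod_modulus:
  assumes "d \<ge> 2"
  shows "(\<Prod>i\<in>{0..d-2}. modulus q d P i) = ((d - 1) * (q - 1) + 1) * pmin P q ^ (d - 2)"
proof -
  have "{0..d-2} = insert 0 {1..d-2}" by auto
  hence "(\<Prod>i\<in>{0..d-2}. modulus q d P i) = modulus q d P 0 * (\<Prod>i\<in>{1..d-2}. modulus q d P i)"
    by simp
  also have "(\<Prod>i\<in>{1..d-2}. modulus q d P i) = (\<Prod>i\<in>{1..d-2}. pmin P q)"
    by (rule prod.cong) (auto simp: modulus_def)
  also have "\<dots> = pmin P q ^ (d - 2)" by simp
  finally show ?thesis by (simp add: modulus_def)
qed

theorem theorem7:
  fixes q d P n :: nat
  assumes "q \<ge> 2" and "d \<ge> 2" and "P \<ge> 1" and "n \<ge> 1"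
  shows "(\<forall>a. (\<forall>i \<in> {0..d - 2}. a i < modulus q d P i) \<longrightarrow>
            (\<forall>x \<in> code q d P n a. \<forall>y \<in> code q d P n a. x \<noteq> y \<longrightarrow>
               Max (diff_pos x y) - Min (diff_pos x y) < P \<longrightarrow> hamming x y \<ge> d))
       \<and> (\<exists>a. (\<forall>i \<in> {0..d - 2}. a i < modulus q d P i) \<and>
            card (code q d P n a) > 0 \<and>
            redundancy q n (code q d P n a)
              \<le> real (d - 2) * log (real q) (2 * real (max P q))
                 + log (real q) (real ((d - 1) * (q - 1) + 1)))"
proof (rule conjI)
  show "\<forall>a. (\<forall>i \<in> {0..d - 2}. a i < modulus q d P i) \<longrightarrow>
            (\<forall>x \<in> code q d P n a. \<forall>y \<in> code q d P n a. x \<noteq> y \<longrightarrow>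
               Max (diff_pos x y) - Min (diff_pos x y) < P \<longrightarrow> hamming x y \<ge> d)"
    using part1[OF assms(1,2,3)] by blast
next
  obtain a where a: "\<forall>i\<in>{0..d-2}. a i < modulus q d P i"
    and big: "q ^ n \<le> card (code q d P n a) * (\<Prod>i\<in>{0..d-2}. modulus q d P i)"
    using pigeon[OF assms(1)] by blast
  define c where "c = card (code q d P n a)"
  define m0 where "m0 = (d - 1) * (q - 1) + 1"
  define p where "p = pmin P q"
  have pp: "prime p" "max P q \<le> p" "p \<le> 2 * max P q" using pmin_props[OF assms(1)] unfolding p_def by auto
  have big': "q ^ n \<le> c * (m0 * p ^ (d - 2))" using big unfolding c_def m0_def p_def prod_modulus[OF assms(2)] .
  have qpos: "q ^ n > 0" using assms(1) by simp
  have cpos: "c > 0" using big' qpos by (cases c) auto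
  have m0pos: "m0 > 0" unfolding m0_def by simp
  have ppos: "p > 0" using pp(1) prime_gt_0_nat by simp
  have q1: "(1::real) < real q" using assms(1) by simp
  have "real n = log (real q) (real q ^ n)" using q1 by (simp add: log_nat_power)
  also have "\<dots> \<le> log (real q) (real c * (real m0 * real p ^ (d - 2)))"
  proof (subst log_le_cancel_iff[OF q1])
    show "real q ^ n \<le> real c * (real m0 * real p ^ (d - 2))" using big'
      by (metis of_nat_le_iff of_nat_mult of_nat_power)
  qed (use q1 cpos m0pos ppos in auto)
  also have "\<dots> = log (real q) (real c) + log (real q) (real m0) + real (d - 2) * log (real q) (real p)"
    using cpos m0pos ppos by (simp add: log_mult log_nat_power)
  also have "log (real q) (real p) \<le> log (real q) (2 * real (max P q))"
  proof (subst log_le_cancel_iff[OF q1])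
    show "real p \<le> 2 * real (max P q)" using pp(3) by (metis of_nat_le_iff of_nat_mult of_nat_numeral)
  qed (use ppos assms in auto)
  hence "real (d - 2) * log (real q) (real p) \<le> real (d - 2) * log (real q) (2 * real (max P q))"
    by (intro mult_left_mono) simp_all
  finally have "real n - log (real q) (real c) \<le> real (d - 2) * log (real q) (2 * real (max P q)) + log (real q) (real m0)"
    by linarith
  hence "redundancy q n (code q d P n a) \<le> real (d - 2) * log (real q) (2 * real (max P q))
                 + log (real q) (real ((d - 1) * (q - 1) + 1))"
    unfolding redundancy_def c_def[symmetric] m0_def .
  thus "\<exists>a. (\<forall>i \<in> {0..d - 2}. a i < modulus q d P i) \<and>
            card (code q d P n a) > 0 \<and>
            redundancy q n (code q d P n a)
              \<le> real (d - 2) * log (real q) (2 * real (max P q))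
                 + log (real q) (real ((d - 1) * (q - 1) + 1))"
    using a cpos unfolding c_def by blast
qed

end
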